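(* Let $\underline{t}$ and $\underline{u}$ be increment arrays of the same size $s$ for $n$ agents with $\underline{t}\approx\underline{u}$. Then \[\bigcup_{i=1}^{n}\{C(i,\underline{t})\}=\bigcup_{i=1}^{n}\{C(i,\underline{u})\},\] i.e.\ the set of coalitions generated by $\underline{t}$ from all starting agents equals the set generated by $\underline{u}$ from all starting agents.
   Context: Agent identifiers are $\{1,\ldots,n\}$, arithmetic on identifiers is modulo $n$ with representatives in $\{1,\ldots,n\}$ (a value $0$ is replaced by $n$). An increment array (IA) of size $s$ ($1\le s\le n$) for $n$ agents is a tuple $\underline{t}=\langle t_0,\ldots,t_{s-1}\rangle$ of non-negative integers with $\sum t_i=n-s$. Cumulative increments: $\varphi_1=0$, $\varphi_i=\sum_{k=0}^{i-2}(t_k+1)$ for $2\le i\le s+1$. The coalition generated from $x$ is $C(x,\underline{t})=\{x\}\cup\bigcup_{i=2}^{s}\{(x+\varphi_i)\bmod n\}$ (residues in $\{1,\ldots,n\}$). Two IAs of the same size are equivalent, $\underline{t}\approx\underline{u}$, if $\underline{u}$ is a circular shift of $\underline{t}$: there is $0\le k\le s-1$ with $\langle u_0,\ldots,u_{s-1}\rangle=\langle t_k,\ldots,t_{s-1},t_0,\ldots,t_{k-1}\rangle$. *)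

theory Defs
  imports Main
begin

definition is_IA :: "nat \<Rightarrow> nat \<Rightarrow> nat list \<Rightarrow> bool" where
  "is_IA n s t \<longleftrightarrow> 1 \<le> s \<and> s \<le> n \<and> length t = s \<and> sum_list t + s = n"

definition phi :: "nat list \<Rightarrow> nat \<Rightarrow> nat" where
  "phi t i = (\<Sum>k<i - 1. t ! k + 1)"

definition modrep :: "nat \<Rightarrow> nat \<Rightarrow> nat" where
  "modrep n a = (if a mod n = 0 then n else a mod n)"

definition coalition :: "nat \<Rightarrow> nat \<Rightarrow> nat list \<Rightarrow> nat set" where
  "coalition n x t = {x} \<union> (\<Union>i\<in>{2..length t}. {modrep n (x + phi t i)})"

definition IA_equiv :: "nat list \<Rightarrow> nat list \<Rightarrow> bool" where
  "IA_equiv t u \<longleftrightarrow> length u = length t \<and>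
     (\<exists>k. k \<le> length t - 1 \<and> u = drop k t @ take k t)"

end

theory Submission
  imports Defs
begin

lemma modrep_mod: "n > 0 \<Longrightarrow> modrep n a mod n = a mod n"
  by (simp add: modrep_def)

lemma modrep_cong: "n > 0 \<Longrightarrow> a mod n = b mod n \<Longrightarrow> modrep n a = modrep n b"
  by (simp add: modrep_def)

lemma modrep_id: "1 \<le> x \<Longrightarrow> x \<le> n \<Longrightarrow> modrep n x = x"
  by (cases "x = n") (auto simp: modrep_def)

lemma phi_alt: "i - 1 \<le> length t \<Longrightarrow> phi t i = sum_list (take (i-1) (map Suc t))"
  by (simp add: phi_def sum_list_sum_nth atLeast0LessThan min_def)

lemma shift_sum:
  fixes L :: "nat list"
  assumes "k < length L" "j < length L"
  shows "(sum_list (take k L) + sum_list (take j (drop k L @ take k L))) mod (sum_list L)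
       = sum_list (take ((k+j) mod length L) L) mod sum_list L"
proof (cases "k + j < length L")
  case True
  then have "take j (drop k L @ take k L) = take j (drop k L)" by simp
  moreover have "take k L @ take j (drop k L) = take (k+j) L" by (simp add: take_add)
  ultimately show ?thesis using True
    by (metis sum_list_append mod_less)
next
  case False
  let ?m = "k + j - length L"
  have mk: "?m \<le> k" using assms by simp
  have e: "take j (drop k L @ take k L) = drop k L @ take ?m L"
    using False assms mk by (simp add: min_def ac_simps)
  have "sum_list (take k L) + sum_list (take j (drop k L @ take k L)) = sum_list L + sum_list (take ?m L)"
    unfolding e by (metis add.assoc append_take_drop_id sum_list_append)
  moreover have "(k+j) mod length L = ?m" using False assms
    by (simp add: le_mod_geq)
  ultimately show ?thesis by simp
qed

lemma coal_img:
  assumes "1 \<le> x" "x \<le> n" "length t \<ge> 1"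
  shows "coalition n x t = (\<lambda>j. modrep n (x + sum_list (take j (map Suc t)))) ` {..<length t}"
proof -
  have a: "{..<length t} = insert 0 ((\<lambda>i. i - 1) ` {2..length t})"
  proof (rule set_eqI)
    fix j show "j \<in> {..<length t} \<longleftrightarrow> j \<in> insert 0 ((\<lambda>i. i - 1) ` {2..length t})"
      using assms(3) by (cases j) (auto intro!: image_eqI[where x="j+1"])
  qed
  let ?g = "\<lambda>j. modrep n (x + sum_list (take j (map Suc t)))"
  have "coalition n x t = {x} \<union> (\<lambda>i. modrep n (x + phi t i)) ` {2..length t}"
    unfolding coalition_def by auto
  also have "(\<lambda>i. modrep n (x + phi t i)) ` {2..length t} = (\<lambda>i. ?g (i - 1)) ` {2..length t}"
    by (rule image_cong) (auto simp: phi_alt)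
  also have "\<dots> = ?g ` ((\<lambda>i. i - 1) ` {2..length t})" by (simp add: image_image)
  also have "{x} = {?g 0}" using assms by (simp add: modrep_id)
  finally show ?thesis unfolding a by simp
qed

theorem lemma3:
  fixes n s :: nat and t u :: "nat list"
  assumes "is_IA n s t" and "is_IA n s u" and "IA_equiv t u"
  shows "(\<Union>i\<in>{1..n}. {coalition n i t}) = (\<Union>i\<in>{1..n}. {coalition n i u})"
proof -
  define L where "L = map Suc t"
  have s1: "1 \<le> s" and sn: "s \<le> n" and lt: "length t = s" and lu: "length u = s"
    and sumL: "sum_list L = n"
    using assms(1,2) by (auto simp: is_IA_def L_def sum_list_Suc)
  have n0: "n > 0" using s1 sn by simp
  obtain k where k0: "k \<le> length t - 1" and ueq: "u = drop k t @ take k t"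
    using assms(3) by (auto simp: IA_equiv_def)
  have k: "k < s" using k0 s1 lt by simp
  have Lu: "map Suc u = drop k L @ take k L" by (simp add: ueq L_def drop_map take_map)
  have lL: "length L = s" by (simp add: L_def lt)
  define P where "P = sum_list (take k L)"
  have Pn: "P \<le> n" unfolding P_def sumL[symmetric]
    by (metis append_take_drop_id le_add1 sum_list_append)
  have key: "\<And>j. j < s \<Longrightarrow> (P + sum_list (take j (map Suc u))) mod n
        = sum_list (take ((k+j) mod s) L) mod n"
    using shift_sum[of k L] k lL sumL unfolding Lu P_def by metis
  have main: "coalition n (modrep n (x + P)) u = coalition n x t" if x: "1 \<le> x" "x \<le> n" for x
  proof -
    have fx: "1 \<le> modrep n (x + P)" "modrep n (x + P) \<le> n"
      using n0 by (auto simp: modrep_def)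
    have eq1: "modrep n (modrep n (x + P) + sum_list (take j (map Suc u)))
        = modrep n (x + sum_list (take ((k+j) mod s) L))" if "j < s" for j
    proof (rule modrep_cong[OF n0])
      have "(modrep n (x + P) + sum_list (take j (map Suc u))) mod n
          = (x + (P + sum_list (take j (map Suc u))) mod n) mod n"
        using n0 by (metis add.assoc mod_add_left_eq mod_add_right_eq modrep_mod)
      also have "\<dots> = (x + sum_list (take ((k+j) mod s) L) mod n) mod n"
        using key[OF that] by simp
      also have "\<dots> = (x + sum_list (take ((k+j) mod s) L)) mod n"
        by (simp add: mod_add_right_eq)
      finally show "(modrep n (x + P) + sum_list (take j (map Suc u))) mod n
          = (x + sum_list (take ((k+j) mod s) L)) mod n" .
    qed
    have bij: "(\<lambda>j. (k+j) mod s) ` {..<s} = {..<s}"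
    proof (rule set_eqI, rule iffI)
      fix j assume "j \<in> (\<lambda>j. (k+j) mod s) ` {..<s}" then show "j \<in> {..<s}" using s1 by auto
    next
      fix j assume j: "j \<in> {..<s}"
      have "(k + (j + s - k) mod s) mod s = j" using j k
        by (metis add.commute le_add_diff_inverse2 less_imp_le_nat lessThan_iff mod_add_right_eq mod_add_self2 mod_less trans_le_add2 diff_add_inverse add_diff_assoc)
      then show "j \<in> (\<lambda>j. (k+j) mod s) ` {..<s}" using s1
        by (intro image_eqI[where x="(j + s - k) mod s"]) auto
    qed
    have "coalition n (modrep n (x + P)) u
        = (\<lambda>j. modrep n (modrep n (x + P) + sum_list (take j (map Suc u)))) ` {..<s}"
      using coal_img[OF fx] lu s1 by simp
    also have "\<dots> = (\<lambda>j. modrep n (x + sum_list (take ((k+j) mod s) L))) ` {..<s}"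
      using eq1 by (auto intro!: image_cong)
    also have "\<dots> = (\<lambda>j. modrep n (x + sum_list (take j L))) ` ((\<lambda>j. (k+j) mod s) ` {..<s})"
      by (simp add: image_image)
    also have "\<dots> = coalition n x t"
      unfolding bij using coal_img[OF x] lt s1 L_def by simp
    finally show ?thesis .
  qed
  show ?thesis
  proof (rule set_eqI, rule iffI)
    fix c assume "c \<in> (\<Union>i\<in>{1..n}. {coalition n i t})"
    then obtain x where x: "1 \<le> x" "x \<le> n" "c = coalition n x t" by auto
    have "1 \<le> modrep n (x + P)" "modrep n (x + P) \<le> n" using n0 by (auto simp: modrep_def)
    then show "c \<in> (\<Union>i\<in>{1..n}. {coalition n i u})" using main[OF x(1,2)] x(3) by auto
  next
    fix c assume "c \<in> (\<Union>i\<in>{1..n}. {coalition n i u})"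
    then obtain y where y: "1 \<le> y" "y \<le> n" "c = coalition n y u" by auto
    define x where "x = modrep n (y + (n - P))"
    have x: "1 \<le> x" "x \<le> n" using n0 by (auto simp: modrep_def x_def)
    have "modrep n (x + P) = modrep n (y + n)"
      by (rule modrep_cong[OF n0]) (metis x_def Pn add.assoc le_add_diff_inverse2 mod_add_left_eq modrep_mod n0)
    also have "\<dots> = y" using y n0 by (metis modrep_cong mod_add_self2 modrep_id)
    finally have "c = coalition n x t" using main[OF x] y(3) by simp
    then show "c \<in> (\<Union>i\<in>{1..n}. {coalition n i t})" using x by auto
  qed
qed

end
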